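(* Let $G$ be an infinite group. Then (i) $BR_G$ is a translation invariant ideal in $\mathcal{P}_G$; (ii) $BR_G^{\wedge}$ is a closed ideal of the semigroup $\beta G$, and an ultrafilter $p\in\beta G$ belongs to $BR_G^{\wedge}$ if and only if every member $P\in p$ contains an $(n,n)$-rectangle for every $n\in\mathbb{N}$; (iii) $BR_G\subsetneq FT_G$.
   Context: For $X,Y\subseteq G$, the product $XY$ is an $(n,m)$-rectangle if $|X|=n$, $|Y|=m$; a set $A$ has (contains) an $(n,m)$-rectangle if $XY\subseteq A$ for some such $X,Y$. $A$ has bounded rectangles if there is $n\in\mathbb{N}$ such that $A$ contains no $(n,n)$-rectangle; $BR_G$ is the family of such sets. An ideal in $\mathcal{P}_G$ is a family closed under finite unions and subsets not containing $G$; it is translation invariant if $gA,Ag$ belong to it whenever $A$ does. $A$ is $n$-thin if $g_0A\cap\dots\cap g_nA$ is finite for all distinct $g_0,\dots,g_n$; $FT_G$ is the family of sets that are $n$-thin for some $n$. $\beta G$ is the semigroup of ultrafilters on $G$, and $\mathcal{I}^{\wedge}=\{p\in\beta G: G\setminus A\in p$ for each $A\in\mathcal{I}\}$. *)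

theory Defs
  imports Main
begin

text \<open>The group G is written additively as a type of class group_add
  (not necessarily commutative); the paper's product xy is x + y.\<close>

definition setprod :: "'a::group_add set \<Rightarrow> 'a set \<Rightarrow> 'a set" where
  "setprod X Y = {x + y | x y. x \<in> X \<and> y \<in> Y}"

definition ltrans :: "'a::group_add \<Rightarrow> 'a set \<Rightarrow> 'a set" where
  "ltrans g A = (\<lambda>a. g + a) ` A"

definition rtrans :: "'a set \<Rightarrow> 'a::group_add \<Rightarrow> 'a set" where
  "rtrans A g = (\<lambda>a. a + g) ` A"

definition has_rectangle :: "'a::group_add set \<Rightarrow> nat \<Rightarrow> nat \<Rightarrow> bool" where
  "has_rectangle A n m \<longleftrightarrow>
     (\<exists>X Y. finite X \<and> finite Y \<and> card X = n \<and> card Y = m \<and> setprod X Y \<subseteq> A)"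

definition BR :: "'a::group_add set set" where
  "BR = {A. \<exists>n. \<not> has_rectangle A n n}"

definition thin :: "nat \<Rightarrow> 'a::group_add set \<Rightarrow> bool" where
  "thin n A \<longleftrightarrow> (\<forall>F. finite F \<and> card F = Suc n \<longrightarrow> finite (\<Inter>g\<in>F. ltrans g A))"

definition FT :: "'a::group_add set set" where
  "FT = {A. \<exists>n. thin n A}"

definition set_ideal :: "'a set set \<Rightarrow> bool" where
  "set_ideal I \<longleftrightarrow>
     (\<forall>A\<in>I. \<forall>B\<in>I. A \<union> B \<in> I) \<and> (\<forall>A\<in>I. \<forall>B. B \<subseteq> A \<longrightarrow> B \<in> I) \<and> UNIV \<notin> I"

definition translation_invariant :: "'a::group_add set set \<Rightarrow> bool" where
  "translation_invariant I \<longleftrightarrow> (\<forall>A\<in>I. \<forall>g. ltrans g A \<in> I \<and> rtrans A g \<in> I)"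

text \<open>Ultrafilters on G, represented as families of subsets; beta G is the set of them.\<close>
definition is_ultrafilter :: "'a set set \<Rightarrow> bool" where
  "is_ultrafilter p \<longleftrightarrow>
     UNIV \<in> p \<and> {} \<notin> p \<and>
     (\<forall>A B. A \<in> p \<and> A \<subseteq> B \<longrightarrow> B \<in> p) \<and>
     (\<forall>A B. A \<in> p \<and> B \<in> p \<longrightarrow> A \<inter> B \<in> p) \<and>
     (\<forall>A. A \<in> p \<or> - A \<in> p)"

definition betaG :: "'a set set set" where
  "betaG = {p. is_ultrafilter p}"

text \<open>Semigroup operation on beta G: A \<in> p q iff {x. x^{-1}A \<in> q} \<in> p.\<close>
definition uprod :: "'a::group_add set set \<Rightarrow> 'a set set \<Rightarrow> 'a set set" where
  "uprod p q = {A. {x. {y. x + y \<in> A} \<in> q} \<in> p}"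

text \<open>Closed subsets of beta G (Stone topology, basic open sets {p. A \<in> p}).\<close>
definition beta_closed :: "'a set set set \<Rightarrow> bool" where
  "beta_closed U \<longleftrightarrow> U \<subseteq> betaG \<and>
     (\<forall>p\<in>betaG. p \<notin> U \<longrightarrow> (\<exists>A\<in>p. \<forall>q\<in>U. A \<notin> q))"

definition semigroup_ideal :: "'a::group_add set set set \<Rightarrow> bool" where
  "semigroup_ideal L \<longleftrightarrow> L \<subseteq> betaG \<and> L \<noteq> {} \<and>
     (\<forall>p\<in>betaG. \<forall>q\<in>L. uprod p q \<in> L \<and> uprod q p \<in> L)"

definition hat :: "'a set set \<Rightarrow> 'a set set set" where
  "hat I = {p\<in>betaG. \<forall>A\<in>I. - A \<in> p}"

end

theory Submission
  imports Defs
begin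


lemma setprod_mono: "X \<subseteq> X' \<Longrightarrow> Y \<subseteq> Y' \<Longrightarrow> setprod X Y \<subseteq> setprod X' Y'"
  unfolding setprod_def by blast

lemma has_rect_mono:
  assumes "has_rectangle A N N" "n \<le> N" shows "has_rectangle A n n"
proof -
  obtain X Y where XY: "finite X" "finite Y" "card X = N" "card Y = N" "setprod X Y \<subseteq> A"
    using assms(1) unfolding has_rectangle_def by blast
  obtain X' where X': "X' \<subseteq> X" "card X' = n" "finite X'" using obtain_subset_with_card_n[of n X] XY assms(2) by auto
  obtain Y' where Y': "Y' \<subseteq> Y" "card Y' = n" "finite Y'" using obtain_subset_with_card_n[of n Y] XY assms(2) by auto
  have "setprod X' Y' \<subseteq> A" using setprod_mono[OF X'(1) Y'(1)] XY(5) by blast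
  then show ?thesis unfolding has_rectangle_def using X' Y' by blast
qed

lemma has_rect_subset: "has_rectangle B n m \<Longrightarrow> B \<subseteq> A \<Longrightarrow> has_rectangle A n m"
  unfolding has_rectangle_def by blast

lemma pigeon:
  assumes "finite X" "f ` X \<subseteq> T" "finite T" "card T * N < card X"
  shows "\<exists>t\<in>T. N \<le> card {x\<in>X. f x = t}"
proof (rule ccontr)
  assume "\<not> ?thesis"
  then have lt: "\<forall>t\<in>T. card {x\<in>X. f x = t} \<le> N" by force
  have "X = (\<Union>t\<in>T. {x\<in>X. f x = t})" using assms(2) by blast
  then have "card X \<le> (\<Sum>t\<in>T. card {x\<in>X. f x = t})" using card_UN_le[OF assms(3)] by metis
  also have "\<dots> \<le> (\<Sum>t\<in>T. N)" by (rule sum_mono) (use lt in auto)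
  also have "\<dots> = card T * N" by simp
  finally show False using assms(4) by simp
qed

lemma ramsey_rect:
  assumes nA: "\<not> has_rectangle A N N" and nB: "\<not> has_rectangle B N N" and N: "N \<ge> 1"
  shows "\<not> has_rectangle (A \<union> B) (2*2^(2*N)*N + 2*N + 1) (2*2^(2*N)*N + 2*N + 1)"
    (is "\<not> has_rectangle _ ?K ?K")
proof
  assume "has_rectangle (A \<union> B) ?K ?K"
  then obtain X Y where XY: "finite X" "finite Y" "card X = ?K" "card Y = ?K" "setprod X Y \<subseteq> A \<union> B"
    unfolding has_rectangle_def by blast
  obtain Y0 where Y0: "Y0 \<subseteq> Y" "card Y0 = 2*N" "finite Y0"
    using obtain_subset_with_card_n[of "2*N" Y] XY by auto
  define Tx where "Tx x = {y\<in>Y0. x + y \<in> A}" for x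
  define f where "f x = (if N \<le> card (Tx x) then (True, Tx x) else (False, Y0 - Tx x))" for x
  define T where "T = (UNIV :: bool set) \<times> Pow Y0"
  have fT: "f ` X \<subseteq> T" unfolding f_def T_def Tx_def by auto
  have cT: "card T = 2 * 2^(2*N)" unfolding T_def using Y0 by (simp add: card_cartesian_product card_Pow)
  have "finite T" unfolding T_def using Y0 by simp
  then obtain t where t: "t \<in> T" "N \<le> card {x\<in>X. f x = t}"
    using pigeon[OF XY(1) fT, of N] cT XY(3) by auto
  obtain c S where cS: "t = (c, S)" by (cases t)
  define X1 where "X1 = {x\<in>X. f x = t}"
  have "X1 \<noteq> {}" using t N unfolding X1_def by (metis card.empty not_one_le_zero order_trans)
  then obtain x0 where x0: "x0 \<in> X1" by blast
  have fin_Tx: "finite (Tx x)" for x unfolding Tx_def using Y0 by simp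
  have Tsub: "Tx x \<subseteq> Y0" for x unfolding Tx_def by auto
  have props: "N \<le> card S \<and> S \<subseteq> Y0 \<and> (c \<longrightarrow> (\<forall>y\<in>S. x + y \<in> A)) \<and> (\<not> c \<longrightarrow> (\<forall>y\<in>S. x + y \<notin> A))"
    if "x \<in> X1" for x
  proof (cases "N \<le> card (Tx x)")
    case True
    then show ?thesis using that cS unfolding X1_def f_def Tx_def by auto
  next
    case False
    have "card (Y0 - Tx x) = 2*N - card (Tx x)" using card_Diff_subset[OF fin_Tx Tsub] Y0 by simp
    then have "N \<le> card (Y0 - Tx x)" using False by simp
    then show ?thesis using that cS False unfolding X1_def f_def Tx_def by auto
  qed
  obtain X2 where X2: "X2 \<subseteq> X1" "card X2 = N" "finite X2"
    using obtain_subset_with_card_n[of N X1] t unfolding X1_def by auto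
  obtain S2 where S2: "S2 \<subseteq> S" "card S2 = N" "finite S2"
    using obtain_subset_with_card_n[of N S] props[OF x0] by auto
  show False
  proof (cases c)
    case True
    have "setprod X2 S2 \<subseteq> A" unfolding setprod_def using props X2 S2 True by blast
    then show False using nA X2 S2 unfolding has_rectangle_def by blast
  next
    case False
    have "setprod X2 S2 \<subseteq> B"
    proof
      fix z assume "z \<in> setprod X2 S2"
      then obtain x y where z: "z = x + y" "x \<in> X2" "y \<in> S2" unfolding setprod_def by blast
      have xX1: "x \<in> X1" using z X2 by auto
      then have "x \<in> X" unfolding X1_def by auto
      moreover have "y \<in> Y" using props[OF xX1] z S2 Y0 by auto
      ultimately
      have "z \<in> A \<union> B" using XY(5) z unfolding setprod_def by blast
      moreover have "z \<notin> A" using props[of x] z X2 S2 False by blast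
      ultimately show "z \<in> B" by blast
    qed
    then show False using nB X2 S2 unfolding has_rectangle_def by blast
  qed
qed

lemma has_rect_0: "has_rectangle A 0 0"
  unfolding has_rectangle_def setprod_def by (rule exI[of _ "{}"], rule exI[of _ "{}"]) auto

lemma BR_union: assumes "A \<in> BR" "B \<in> BR" shows "A \<union> B \<in> BR"
proof -
  obtain n m where "\<not> has_rectangle A n n" "\<not> has_rectangle B m m" using assms unfolding BR_def by auto
  then have "\<not> has_rectangle A (max n m) (max n m)" "\<not> has_rectangle B (max n m) (max n m)"
    using has_rect_mono by (metis max.cobounded1 max.cobounded2)+
  moreover have "max n m \<ge> 1" using calculation has_rect_0 by (metis less_one not_less)
  ultimately show ?thesis using ramsey_rect unfolding BR_def by blast
qed

lemma BR_subset: "A \<in> BR \<Longrightarrow> B \<subseteq> A \<Longrightarrow> B \<in> BR"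
  unfolding BR_def using has_rect_subset by blast

lemma UNIV_not_BR:
  assumes "infinite (UNIV :: 'a::group_add set)" shows "(UNIV :: 'a set) \<notin> BR"
proof
  assume "(UNIV :: 'a set) \<in> BR"
  then obtain n where n: "\<not> has_rectangle (UNIV :: 'a set) n n" unfolding BR_def by auto
  obtain X :: "'a set" where "finite X" "card X = n" using infinite_arbitrarily_large[OF assms] by blast
  then have "has_rectangle (UNIV :: 'a set) n n" unfolding has_rectangle_def by blast
  then show False using n by simp
qed

lemma ltrans_BR: assumes "A \<in> BR" shows "ltrans g A \<in> BR"
proof -
  obtain n where n: "\<not> has_rectangle A n n" using assms unfolding BR_def by auto
  have "\<not> has_rectangle (ltrans g A) n n"
  proof
    assume "has_rectangle (ltrans g A) n n"
    then obtain X Y where XY: "finite X" "finite Y" "card X = n" "card Y = n" "setprod X Y \<subseteq> ltrans g A"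
      unfolding has_rectangle_def by blast
    define X' where "X' = (\<lambda>x. -g + x) ` X"
    have "card X' = n" unfolding X'_def using XY by (simp add: card_image inj_on_def)
    moreover have "setprod X' Y \<subseteq> A"
    proof
      fix z assume "z \<in> setprod X' Y"
      then obtain x y where z: "z = -g + x + y" "x \<in> X" "y \<in> Y" unfolding setprod_def X'_def by blast
      then have "x + y \<in> ltrans g A" using XY(5) unfolding setprod_def by blast
      then obtain a where "a \<in> A" "x + y = g + a" unfolding ltrans_def by blast
      then show "z \<in> A" using z by (simp add: add.assoc)
    qed
    ultimately show False using n XY X'_def unfolding has_rectangle_def by blast
  qed
  then show ?thesis unfolding BR_def by blast
qed

lemma rtrans_BR: assumes "A \<in> BR" shows "rtrans A g \<in> BR"
proof -
  obtain n where n: "\<not> has_rectangle A n n" using assms unfolding BR_def by auto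
  have "\<not> has_rectangle (rtrans A g) n n"
  proof
    assume "has_rectangle (rtrans A g) n n"
    then obtain X Y where XY: "finite X" "finite Y" "card X = n" "card Y = n" "setprod X Y \<subseteq> rtrans A g"
      unfolding has_rectangle_def by blast
    define Y' where "Y' = (\<lambda>y. y + -g) ` Y"
    have "card Y' = n" unfolding Y'_def using XY by (simp add: card_image inj_on_def)
    moreover have "setprod X Y' \<subseteq> A"
    proof
      fix z assume "z \<in> setprod X Y'"
      then obtain x y where z: "z = x + (y + -g)" "x \<in> X" "y \<in> Y" unfolding setprod_def Y'_def by blast
      then have "x + y \<in> rtrans A g" using XY(5) unfolding setprod_def by blast
      then obtain a where "a \<in> A" "x + y = a + g" unfolding rtrans_def by blast
      then show "z \<in> A" using z by (metis add.assoc add.right_inverse add_0_right)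
    qed
    ultimately show False using n XY Y'_def unfolding has_rectangle_def by blast
  qed
  then show ?thesis unfolding BR_def by blast
qed



definition pfilter :: "'a set set \<Rightarrow> bool" where
  "pfilter F \<longleftrightarrow> UNIV \<in> F \<and> {} \<notin> F \<and> (\<forall>A B. A \<in> F \<and> A \<subseteq> B \<longrightarrow> B \<in> F) \<and>
     (\<forall>A B. A \<in> F \<and> B \<in> F \<longrightarrow> A \<inter> B \<in> F)"

lemma uf_pfilter: "is_ultrafilter p \<Longrightarrow> pfilter p"
  unfolding is_ultrafilter_def pfilter_def by blast

lemma uf_not_both: "is_ultrafilter p \<Longrightarrow> A \<in> p \<Longrightarrow> - A \<in> p \<Longrightarrow> False"
proof -
  assume "is_ultrafilter p" "A \<in> p" "- A \<in> p"
  then have "A \<inter> - A \<in> p" "{} \<notin> p" unfolding is_ultrafilter_def by blast+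
  then show False by simp
qed

lemma uf_compl_iff: "is_ultrafilter p \<Longrightarrow> - A \<in> p \<longleftrightarrow> A \<notin> p"
  using uf_not_both unfolding is_ultrafilter_def by blast

lemma uf_finite_Inter:
  assumes "is_ultrafilter p" "finite F" "F \<subseteq> p" shows "\<Inter>F \<in> p"
  using assms(2,3)
proof (induction F rule: finite_induct)
  case empty then show ?case using assms(1) unfolding is_ultrafilter_def by simp
next
  case (insert x F) then show ?case using assms(1) unfolding is_ultrafilter_def by simp
qed

lemma uf_finite_INT:
  assumes "is_ultrafilter p" "finite I" "\<forall>i\<in>I. f i \<in> p" shows "(\<Inter>i\<in>I. f i) \<in> p"
  using uf_finite_Inter[OF assms(1), of "f ` I"] assms by auto

lemma pfD: assumes "pfilter F"
  shows "UNIV \<in> F" "{} \<notin> F" "\<And>A B. A \<in> F \<Longrightarrow> A \<subseteq> B \<Longrightarrow> B \<in> F"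
    "\<And>A B. A \<in> F \<Longrightarrow> B \<in> F \<Longrightarrow> A \<inter> B \<in> F"
  using assms unfolding pfilter_def by blast+

lemma pfI: assumes "UNIV \<in> F" "{} \<notin> F" "\<And>A B. A \<in> F \<Longrightarrow> A \<subseteq> B \<Longrightarrow> B \<in> F"
    "\<And>A B. A \<in> F \<Longrightarrow> B \<in> F \<Longrightarrow> A \<inter> B \<in> F"
  shows "pfilter F"
  using assms unfolding pfilter_def by blast

lemma ultrafilter_exists:
  assumes F: "pfilter F" shows "\<exists>U. is_ultrafilter U \<and> F \<subseteq> U"
proof -
  define S where "S = {G. pfilter G \<and> F \<subseteq> G}"
  have "\<exists>M\<in>S. \<forall>X\<in>S. M \<subseteq> X \<longrightarrow> X = M"
  proof (rule Zorn_Lemma2, intro ballI)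
    fix C assume C: "C \<in> chains S"
    show "\<exists>U\<in>S. \<forall>X\<in>C. X \<subseteq> U"
    proof (cases "C = {}")
      case True then show ?thesis using F unfolding S_def by auto
    next
      case False
      have CS: "\<And>X. X \<in> C \<Longrightarrow> pfilter X \<and> F \<subseteq> X" and ch: "\<And>X Y. X\<in>C \<Longrightarrow> Y\<in>C \<Longrightarrow> X \<subseteq> Y \<or> Y \<subseteq> X"
        using C unfolding chains_def chain_subset_def S_def by auto
      obtain X0 where X0: "X0 \<in> C" using False by blast
      have "pfilter (\<Union>C)"
      proof (rule pfI)
        show "UNIV \<in> \<Union>C" using X0 CS[OF X0] pfD(1) by blast
        show "{} \<notin> \<Union>C" using CS pfD(2) by blast
        fix A B
        show "A \<in> \<Union>C \<Longrightarrow> A \<subseteq> B \<Longrightarrow> B \<in> \<Union>C"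
        proof -
          assume "A \<in> \<Union>C" "A \<subseteq> B"
          then obtain X where "X \<in> C" "A \<in> X" by blast
          then show ?thesis using CS pfD(3) \<open>A \<subseteq> B\<close> by blast
        qed
        assume "A \<in> \<Union>C" "B \<in> \<Union>C"
        then obtain X Y where XY: "X \<in> C" "Y \<in> C" "A \<in> X" "B \<in> Y" by blast
        show "A \<inter> B \<in> \<Union>C"
        proof (cases "X \<subseteq> Y")
          case True then have "A \<inter> B \<in> Y" using XY CS[OF XY(2)] pfD(4) by blast
          then show ?thesis using XY by blast
        next
          case False then have "Y \<subseteq> X" using ch XY by blast
          then have "A \<inter> B \<in> X" using XY CS[OF XY(1)] pfD(4) by blast
          then show ?thesis using XY by blast
        qed
      qed
      moreover have "F \<subseteq> \<Union>C" using X0 CS by blast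
      ultimately show ?thesis unfolding S_def by blast
    qed
  qed
  then obtain M where M: "M \<in> S" and max: "\<And>X. X \<in> S \<Longrightarrow> M \<subseteq> X \<Longrightarrow> X = M" by blast
  have pM: "pfilter M" and FM: "F \<subseteq> M" using M unfolding S_def by auto
  have "A \<in> M \<or> - A \<in> M" for A
  proof (rule ccontr)
    assume nn: "\<not> (A \<in> M \<or> - A \<in> M)"
    define M' where "M' = {B. \<exists>C\<in>M. C \<inter> A \<subseteq> B}"
    have ne: "C \<inter> A \<noteq> {}" if "C \<in> M" for C
    proof
      assume "C \<inter> A = {}" then have "C \<subseteq> -A" by blast
      then show False using nn pfD(3)[OF pM that] by blast
    qed
    have "pfilter M'"
    proof (rule pfI)
      show "UNIV \<in> M'" using pfD(1)[OF pM] unfolding M'_def by blast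
      show "{} \<notin> M'" using ne unfolding M'_def by blast
      fix X Y
      show "X \<in> M' \<Longrightarrow> X \<subseteq> Y \<Longrightarrow> Y \<in> M'" unfolding M'_def by blast
      assume "X \<in> M'" "Y \<in> M'"
      then obtain C1 C2 where C: "C1 \<in> M" "C2 \<in> M" "C1 \<inter> A \<subseteq> X" "C2 \<inter> A \<subseteq> Y" unfolding M'_def by blast
      have "C1 \<inter> C2 \<in> M" using pfD(4)[OF pM C(1,2)] .
      moreover have "(C1 \<inter> C2) \<inter> A \<subseteq> X \<inter> Y" using C by blast
      ultimately show "X \<inter> Y \<in> M'" unfolding M'_def by blast
    qed
    moreover have "M \<subseteq> M'" unfolding M'_def by blast
    ultimately have "M' = M" using max FM unfolding S_def by blast
    moreover have "A \<in> M'" unfolding M'_def using pfD(1)[OF pM] by blast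
    ultimately show False using nn by blast
  qed
  then have "is_ultrafilter M" using pfD[OF pM] unfolding is_ultrafilter_def by blast
  then show ?thesis using FM by blast
qed

lemma uprod_uf:
  assumes p: "is_ultrafilter p" and q: "is_ultrafilter q" shows "is_ultrafilter (uprod p q)"
  unfolding is_ultrafilter_def uprod_def
proof (intro conjI allI impI)
  show "UNIV \<in> {A. {x. {y. x + y \<in> A} \<in> q} \<in> p}" using p q unfolding is_ultrafilter_def by simp
  show "{} \<notin> {A. {x. {y. x + y \<in> A} \<in> q} \<in> p}" using p q unfolding is_ultrafilter_def by simp
  fix A B
  show "A \<in> {A. {x. {y. x + y \<in> A} \<in> q} \<in> p} \<and> A \<subseteq> B \<Longrightarrow> B \<in> {A. {x. {y. x + y \<in> A} \<in> q} \<in> p}"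
  proof -
    assume h: "A \<in> {A. {x. {y. x + y \<in> A} \<in> q} \<in> p} \<and> A \<subseteq> B"
    have "{x. {y. x + y \<in> A} \<in> q} \<subseteq> {x. {y. x + y \<in> B} \<in> q}"
    proof
      fix x assume "x \<in> {x. {y. x + y \<in> A} \<in> q}"
      moreover have "{y. x + y \<in> A} \<subseteq> {y. x + y \<in> B}" using h by blast
      ultimately show "x \<in> {x. {y. x + y \<in> B} \<in> q}" using q unfolding is_ultrafilter_def by blast
    qed
    then show ?thesis using h p unfolding is_ultrafilter_def by blast
  qed
  show "A \<in> {A. {x. {y. x + y \<in> A} \<in> q} \<in> p} \<and> B \<in> {A. {x. {y. x + y \<in> A} \<in> q} \<in> p} \<Longrightarrow>
     A \<inter> B \<in> {A. {x. {y. x + y \<in> A} \<in> q} \<in> p}"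
  proof -
    assume h: "A \<in> {A. {x. {y. x + y \<in> A} \<in> q} \<in> p} \<and> B \<in> {A. {x. {y. x + y \<in> A} \<in> q} \<in> p}"
    have "{x. {y. x + y \<in> A} \<in> q} \<inter> {x. {y. x + y \<in> B} \<in> q} \<subseteq> {x. {y. x + y \<in> A \<inter> B} \<in> q}"
    proof
      fix x assume "x \<in> {x. {y. x + y \<in> A} \<in> q} \<inter> {x. {y. x + y \<in> B} \<in> q}"
      then have "{y. x + y \<in> A} \<inter> {y. x + y \<in> B} \<in> q" using q unfolding is_ultrafilter_def by blast
      moreover have "{y. x + y \<in> A} \<inter> {y. x + y \<in> B} = {y. x + y \<in> A \<inter> B}" by blast
      ultimately show "x \<in> {x. {y. x + y \<in> A \<inter> B} \<in> q}" by simp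
    qed
    moreover have "{x. {y. x + y \<in> A} \<in> q} \<inter> {x. {y. x + y \<in> B} \<in> q} \<in> p" using h p unfolding is_ultrafilter_def by blast
    ultimately show ?thesis using p unfolding is_ultrafilter_def by blast
  qed
next
  fix A
  have "{x. {y. x + y \<in> - A} \<in> q} = - {x. {y. x + y \<in> A} \<in> q}"
  proof -
    have "{y. x + y \<in> - A} = - {y. x + y \<in> A}" for x by blast
    then show ?thesis using uf_compl_iff[OF q] by auto
  qed
  then show "A \<in> {A. {x. {y. x + y \<in> A} \<in> q} \<in> p} \<or> - A \<in> {A. {x. {y. x + y \<in> A} \<in> q} \<in> p}"
    using p unfolding is_ultrafilter_def by simp
qed



lemma empty_BR: "{} \<in> BR"
proof -
  have "\<not> has_rectangle ({}::'a set) 1 1"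
  proof
    assume "has_rectangle ({}::'a set) 1 1"
    then obtain X Y :: "'a set" where "card X = 1" "card Y = 1" "setprod X Y \<subseteq> {}"
      unfolding has_rectangle_def by blast
    then obtain x y where "X = {x}" "Y = {y}" by (meson card_1_singletonE)
    then show False using \<open>setprod X Y \<subseteq> {}\<close> unfolding setprod_def by blast
  qed
  then show ?thesis unfolding BR_def by blast
qed

lemma base_pfilter:
  assumes "infinite (UNIV :: 'a::group_add set)"
  shows "pfilter {- A | A. (A::'a set) \<in> BR}"
proof (rule pfI)
  show "UNIV \<in> {- A | A. (A::'a set) \<in> BR}" using empty_BR by force
  show "{} \<notin> {- A | A. (A::'a set) \<in> BR}"
  proof
    assume "{} \<in> {- A | A. (A::'a set) \<in> BR}"
    then obtain A :: "'a set" where "A \<in> BR" "{} = - A" by blast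
    then have "A = UNIV" by blast
    then show False using UNIV_not_BR[OF assms] \<open>A \<in> BR\<close> by simp
  qed
  fix A B :: "'a set"
  show "A \<in> {- A | A. A \<in> BR} \<Longrightarrow> A \<subseteq> B \<Longrightarrow> B \<in> {- A | A. A \<in> BR}"
  proof -
    assume "A \<in> {- A | A. A \<in> BR}" "A \<subseteq> B"
    then obtain C where "C \<in> BR" "A = - C" by blast
    then have "- B \<in> BR" using BR_subset \<open>A \<subseteq> B\<close> by blast
    then show ?thesis by (metis (mono_tags, lifting) double_compl mem_Collect_eq)
  qed
  show "A \<in> {- A | A. A \<in> BR} \<Longrightarrow> B \<in> {- A | A. A \<in> BR} \<Longrightarrow> A \<inter> B \<in> {- A | A. A \<in> BR}"
  proof -
    assume "A \<in> {- A | A. A \<in> BR}" "B \<in> {- A | A. A \<in> BR}"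
    then obtain C D where "C \<in> BR" "A = - C" "D \<in> BR" "B = - D" by blast
    then have "C \<union> D \<in> BR" "A \<inter> B = - (C \<union> D)" using BR_union by auto
    then show ?thesis by blast
  qed
qed

lemma hat_nonempty:
  assumes "infinite (UNIV :: 'a::group_add set)" shows "hat (BR :: 'a set set) \<noteq> {}"
proof -
  obtain U where U: "is_ultrafilter U" "{- A | A. (A::'a set) \<in> BR} \<subseteq> U"
    using ultrafilter_exists[OF base_pfilter[OF assms]] by blast
  then have "U \<in> hat BR" unfolding hat_def betaG_def by blast
  then show ?thesis by blast
qed

lemma hat_closed: "beta_closed (hat (BR :: 'a::group_add set set))"
  unfolding beta_closed_def
proof (intro conjI ballI impI)
  show "hat BR \<subseteq> betaG" unfolding hat_def by blast
  fix p assume p: "p \<in> betaG" "p \<notin> hat (BR :: 'a set set)"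
  then obtain A where A: "A \<in> BR" "- A \<notin> p" unfolding hat_def by blast
  then have "A \<in> p" using p uf_compl_iff unfolding betaG_def by blast
  moreover have "\<forall>q\<in>hat BR. A \<notin> q"
    using A uf_not_both unfolding hat_def betaG_def by blast
  ultimately show "\<exists>A\<in>p. \<forall>q\<in>hat BR. A \<notin> q" by blast
qed

lemma shift_BR:
  assumes A: "A \<in> BR" and p: "is_ultrafilter p"
  shows "{x. {y. x + y \<in> A} \<in> p} \<in> BR"
proof -
  obtain n where n: "\<not> has_rectangle A n n" using A unfolding BR_def by auto
  have "\<not> has_rectangle {x. {y. x + y \<in> A} \<in> p} n n"
  proof
    assume "has_rectangle {x. {y. x + y \<in> A} \<in> p} n n"
    then obtain X Y where XY: "finite X" "finite Y" "card X = n" "card Y = n"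
      "setprod X Y \<subseteq> {x. {y. x + y \<in> A} \<in> p}" unfolding has_rectangle_def by blast
    have "setprod X Y = (\<lambda>(x,y). x + y) ` (X \<times> Y)" unfolding setprod_def by auto
    then have fin: "finite (setprod X Y)" using XY(1,2) by simp
    have "(\<Inter>z\<in>setprod X Y. {y. z + y \<in> A}) \<in> p"
      using uf_finite_INT[OF p fin, of "\<lambda>z. {y. z + y \<in> A}"] XY(5) by blast
    moreover have "{} \<notin> p" using p unfolding is_ultrafilter_def by blast
    ultimately have "(\<Inter>z\<in>setprod X Y. {y. z + y \<in> A}) \<noteq> {}" by force
    then obtain w where "w \<in> (\<Inter>z\<in>setprod X Y. {y. z + y \<in> A})" by blast
    then have w: "\<forall>z\<in>setprod X Y. z + w \<in> A" by blast
    define Y' where "Y' = (\<lambda>y. y + w) ` Y"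
    have "card Y' = n" unfolding Y'_def using XY by (simp add: card_image inj_on_def)
    moreover have "setprod X Y' \<subseteq> A"
    proof
      fix z assume "z \<in> setprod X Y'"
      then obtain x y where z: "z = x + (y + w)" "x \<in> X" "y \<in> Y" unfolding setprod_def Y'_def by blast
      then have "x + y \<in> setprod X Y" unfolding setprod_def by blast
      then have "x + y + w \<in> A" using w by blast
      then show "z \<in> A" using z by (simp add: add.assoc)
    qed
    ultimately show False using n XY Y'_def unfolding has_rectangle_def by blast
  qed
  then show ?thesis unfolding BR_def by blast
qed

lemma hat_ideal:
  assumes "infinite (UNIV :: 'a::group_add set)" shows "semigroup_ideal (hat (BR :: 'a set set))"
  unfolding semigroup_ideal_def
proof (intro conjI ballI)
  show "hat BR \<subseteq> betaG" unfolding hat_def by blast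
  show "hat (BR :: 'a set set) \<noteq> {}" by (rule hat_nonempty[OF assms])
  fix p q :: "'a set set" assume p: "p \<in> betaG" and q: "q \<in> hat (BR :: 'a set set)"
  have pu: "is_ultrafilter p" using p unfolding betaG_def by simp
  have qu: "is_ultrafilter q" using q unfolding hat_def betaG_def by simp
  have qc: "\<And>A. A \<in> BR \<Longrightarrow> - A \<in> q" using q unfolding hat_def by blast
  show "uprod p q \<in> hat BR" unfolding hat_def betaG_def
  proof (intro CollectI conjI ballI)
    show "is_ultrafilter (uprod p q)" by (rule uprod_uf[OF pu qu])
    fix A :: "'a set" assume A: "A \<in> BR"
    have "{x. {y. x + y \<in> - A} \<in> q} = UNIV"
    proof -
      have lt: "y \<in> ltrans (-x) A \<longleftrightarrow> x + y \<in> A" for x y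
      proof
        assume "y \<in> ltrans (-x) A"
        then obtain a where "a \<in> A" "y = -x + a" unfolding ltrans_def by blast
        then show "x + y \<in> A" by (simp add: add_minus_cancel)
      next
        assume "x + y \<in> A"
        moreover have "y = -x + (x + y)" by (simp add: minus_add_cancel)
        ultimately show "y \<in> ltrans (-x) A" unfolding ltrans_def by (rule rev_image_eqI)
      qed
      have "{y. x + y \<in> - A} = - ltrans (-x) A" for x using lt by blast
      then show ?thesis using qc ltrans_BR[OF A] by auto
    qed
    then show "- A \<in> uprod p q" unfolding uprod_def using pu unfolding is_ultrafilter_def by simp
  qed
  show "uprod q p \<in> hat BR" unfolding hat_def betaG_def
  proof (intro CollectI conjI ballI)
    show "is_ultrafilter (uprod q p)" by (rule uprod_uf[OF qu pu])
    fix A :: "'a set" assume A: "A \<in> BR"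
    have "- {x. {y. x + y \<in> A} \<in> p} \<in> q" using qc shift_BR[OF A pu] by blast
    moreover have "- {x. {y. x + y \<in> A} \<in> p} = {x. {y. x + y \<in> - A} \<in> p}"
    proof -
      have "{y. x + y \<in> - A} = - {y. x + y \<in> A}" for x by blast
      then show ?thesis using uf_compl_iff[OF pu] by auto
    qed
    ultimately show "- A \<in> uprod q p" unfolding uprod_def by simp
  qed
qed

lemma hat_char:
  assumes p: "p \<in> betaG"
  shows "p \<in> hat (BR :: 'a::group_add set set) \<longleftrightarrow> (\<forall>P\<in>p. \<forall>n. has_rectangle P n n)"
proof
  assume h: "p \<in> hat (BR :: 'a set set)"
  show "\<forall>P\<in>p. \<forall>n. has_rectangle P n n"
  proof (intro ballI allI, rule ccontr)
    fix P n assume "P \<in> p" "\<not> has_rectangle P n n"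
    then have "P \<in> BR" unfolding BR_def by blast
    then have "- P \<in> p" using h unfolding hat_def by blast
    then show False using uf_not_both \<open>P \<in> p\<close> p unfolding betaG_def by blast
  qed
next
  assume h: "\<forall>P\<in>p. \<forall>n. has_rectangle P n n"
  show "p \<in> hat (BR :: 'a set set)" unfolding hat_def
  proof (intro CollectI conjI ballI)
    show "p \<in> betaG" by fact
    fix A :: "'a set" assume "A \<in> BR"
    then obtain n where "\<not> has_rectangle A n n" unfolding BR_def by blast
    then have "A \<notin> p" using h by blast
    then show "- A \<in> p" using uf_compl_iff p unfolding betaG_def by blast
  qed
qed



lemma BR_FT: "(BR :: 'a::group_add set set) \<subseteq> FT"
proof
  fix A :: "'a set" assume "A \<in> BR"
  then obtain n where n: "\<not> has_rectangle A n n" unfolding BR_def by blast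
  then obtain m where m: "n = Suc m" using has_rect_0 by (cases n) auto
  have "thin m A" unfolding thin_def
  proof (intro allI impI, rule ccontr)
    fix F :: "'a set" assume F: "finite F \<and> card F = Suc m" and inf: "infinite (\<Inter>g\<in>F. ltrans g A)"
    obtain Y where Y: "finite Y" "card Y = n" "Y \<subseteq> (\<Inter>g\<in>F. ltrans g A)"
      using infinite_arbitrarily_large[OF inf] by blast
    define X where "X = uminus ` F"
    have cX: "card X = n" unfolding X_def using F m by (simp add: card_image)
    have "setprod X Y \<subseteq> A"
    proof
      fix z assume "z \<in> setprod X Y"
      then obtain g y where z: "z = -g + y" "g \<in> F" "y \<in> Y" unfolding setprod_def X_def by blast
      then have "y \<in> ltrans g A" using Y by blast
      then obtain a where "a \<in> A" "y = g + a" unfolding ltrans_def by blast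
      then show "z \<in> A" using z by (simp add: minus_add_cancel)
    qed
    then show False using n cX Y F X_def unfolding has_rectangle_def by blast
  qed
  then show "A \<in> FT" unfolding FT_def by blast
qed

lemma choose_set:
  assumes inf: "infinite (UNIV :: 'a set)" and fb: "\<And>v. finite {u. \<not> Q u v \<or> \<not> Q v u}" and fE: "finite E"
  shows "\<exists>S::'a set. finite S \<and> card S = k \<and> S \<inter> E = {} \<and> (\<forall>u\<in>S. \<forall>v\<in>S. u \<noteq> v \<longrightarrow> Q u v)"
proof (induction k)
  case 0 show ?case by (intro exI[of _ "{}"]) auto
next
  case (Suc k)
  then obtain S where S: "finite S" "card S = k" "S \<inter> E = {}" "\<forall>u\<in>S. \<forall>v\<in>S. u \<noteq> v \<longrightarrow> Q u v" by blast
  have "finite (\<Union>v\<in>S. {u. \<not> Q u v \<or> \<not> Q v u})" using S(1) fb by simp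
  then have "finite (E \<union> S \<union> (\<Union>v\<in>S. {u. \<not> Q u v \<or> \<not> Q v u}))" using fE S(1) by simp
  from ex_new_if_finite[OF inf this] obtain u where u: "u \<notin> E \<union> S \<union> (\<Union>v\<in>S. {u. \<not> Q u v \<or> \<not> Q v u})" ..
  have uS: "u \<notin> S" "u \<notin> E" "\<And>v. v \<in> S \<Longrightarrow> Q u v \<and> Q v u" using u by simp_all
  have "finite (insert u S) \<and> card (insert u S) = Suc k \<and> insert u S \<inter> E = {} \<and>
     (\<forall>x\<in>insert u S. \<forall>y\<in>insert u S. x \<noteq> y \<longrightarrow> Q x y)"
  proof (intro conjI ballI impI)
    show "finite (insert u S)" using S(1) by simp
    show "card (insert u S) = Suc k" using S(1,2) uS(1) by simp
    show "insert u S \<inter> E = {}" using S(3) uS(2) by blast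
    fix x y assume "x \<in> insert u S" "y \<in> insert u S" "x \<noteq> y"
    then show "Q x y" using S(4) uS(3) by blast
  qed
  then show ?case by blast
qed

definition Dif :: "'a::group_add set \<Rightarrow> 'a set" where
  "Dif B = {u - v | u v. u \<in> B \<and> v \<in> B}"

lemma Dif_finite: "finite B \<Longrightarrow> finite (Dif B)"
proof -
  assume "finite B"
  moreover have "Dif B = (\<lambda>(u,v). u - v) ` (B \<times> B)" unfolding Dif_def by auto
  ultimately show ?thesis by simp
qed

lemma Dif_mono: "B \<subseteq> C \<Longrightarrow> Dif B \<subseteq> Dif C" unfolding Dif_def by blast

definition good :: "'a::group_add set \<Rightarrow> nat \<Rightarrow> 'a set \<Rightarrow> 'a set \<Rightarrow> bool" where
  "good B k X Y \<longleftrightarrow> finite X \<and> finite Y \<and> card X = k \<and> card Y = k \<and>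
    (\<forall>a\<in>setprod X Y. \<forall>b\<in>B \<union> setprod X Y. a \<noteq> b \<longrightarrow> a - b \<notin> Dif B \<and> b - a \<notin> Dif B)"

lemma gl1: "(u::'a::group_add) - v = d \<Longrightarrow> u = d + v" by (simp add: diff_eq_eq)
lemma gl2: "(v::'a::group_add) - u = d \<Longrightarrow> u = -d + v"
  by (metis diff_add_cancel minus_diff_eq)
lemma gl3: "(x::'a::group_add) + u = c \<Longrightarrow> u = -x + c"
  by (metis minus_add_cancel)
lemma gl4: "(x::'a::group_add) + y - (x' + y') = x + y - y' - x'"
  by (metis diff_conv_add_uminus minus_add add.assoc)

lemma good_exists:
  assumes inf: "infinite (UNIV :: 'a::group_add set)" and fB: "finite (B :: 'a set)"
  shows "\<exists>X Y. good B k X Y"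
proof -
  define D where "D = Dif B"
  have fD: "finite D" unfolding D_def using Dif_finite[OF fB] .
  define QX where "QX x x' \<longleftrightarrow> x - x' \<notin> D" for x x' :: 'a
  have fbX: "finite {u. \<not> QX u v \<or> \<not> QX v u}" for v
  proof -
    have "{u. \<not> QX u v \<or> \<not> QX v u} \<subseteq> (\<lambda>d. d + v) ` D \<union> (\<lambda>d. -d + v) ` D"
      unfolding QX_def using gl1 gl2 by blast
    then show ?thesis using fD finite_subset by blast
  qed
  obtain X where X: "finite X" "card X = k" "\<forall>u\<in>X. \<forall>v\<in>X. u \<noteq> v \<longrightarrow> QX u v"
    using choose_set[OF inf fbX, of "{}" k] by auto
  define QY where "QY y y' \<longleftrightarrow> (\<forall>x\<in>X. \<forall>x'\<in>X. x + y - y' - x' \<notin> D)" for y y' :: 'a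
  have fbY: "finite {u. \<not> QY u v \<or> \<not> QY v u}" for v
  proof -
    have "{u. \<not> QY u v \<or> \<not> QY v u} \<subseteq> (\<lambda>(x,x',d). -x + (d + x' + v)) ` (X \<times> X \<times> D)
       \<union> (\<lambda>(x,x',d). -(-x + (d + x')) + v) ` (X \<times> X \<times> D)"
    proof
      fix u assume "u \<in> {u. \<not> QY u v \<or> \<not> QY v u}"
      then obtain x x' where xx: "x \<in> X" "x' \<in> X" "x + u - v - x' \<in> D \<or> x + v - u - x' \<in> D"
        unfolding QY_def by blast
      show "u \<in> (\<lambda>(x,x',d). -x + (d + x' + v)) ` (X \<times> X \<times> D)
       \<union> (\<lambda>(x,x',d). -(-x + (d + x')) + v) ` (X \<times> X \<times> D)"
      proof (cases "x + u - v - x' \<in> D")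
        case True
        have "u = -x + (x + u - v - x' + x' + v)" by (simp add: minus_add_cancel)
        then show ?thesis using True xx by force
      next
        case False
        then have d: "x + v - u - x' \<in> D" using xx by blast
        have "v - u = -x + (x + v - u - x' + x')"
          by (metis diff_add_cancel diff_conv_add_uminus add.assoc minus_add_cancel)
        then have "u = -(-x + (x + v - u - x' + x')) + v" using gl2 by metis
        then show ?thesis using d xx by force
      qed
    qed
    moreover have "finite (X \<times> X \<times> D)" using X(1) fD by simp
    ultimately show ?thesis using finite_subset by blast
  qed
  define E where "E = (\<Union>x\<in>X. (\<lambda>(d,b). -x + (d + b)) ` (D \<times> B) \<union> (\<lambda>(d,b). -x + (-d + b)) ` (D \<times> B))"
  have fE: "finite E" unfolding E_def using X(1) fD fB by auto
  obtain Y where Y: "finite Y" "card Y = k" "Y \<inter> E = {}" "\<forall>u\<in>Y. \<forall>v\<in>Y. u \<noteq> v \<longrightarrow> QY u v"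
    using choose_set[OF inf fbY fE, of k] by auto
  have "\<forall>a\<in>setprod X Y. \<forall>b\<in>B \<union> setprod X Y. a \<noteq> b \<longrightarrow> a - b \<notin> D \<and> b - a \<notin> D"
  proof (intro ballI impI)
    fix a b assume a: "a \<in> setprod X Y" and b: "b \<in> B \<union> setprod X Y" and ab: "a \<noteq> b"
    obtain x y where xy: "a = x + y" "x \<in> X" "y \<in> Y" using a unfolding setprod_def by blast
    show "a - b \<notin> D \<and> b - a \<notin> D"
    proof (cases "b \<in> B")
      case True
      have "y \<notin> E" using Y(3) xy by blast
      show ?thesis
      proof (intro conjI notI)
        assume "a - b \<in> D"
        then have "y = -x + ((a - b) + b)" using xy gl3 by (metis diff_add_cancel)
        then have "y \<in> E" unfolding E_def using xy True \<open>a - b \<in> D\<close> by force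
        then show False using \<open>y \<notin> E\<close> by blast
      next
        assume "b - a \<in> D"
        then have "y = -x + (-(b - a) + b)" using xy gl3 gl2 by metis
        then have "y \<in> E" unfolding E_def using xy True \<open>b - a \<in> D\<close> by force
        then show False using \<open>y \<notin> E\<close> by blast
      qed
    next
      case False
      then obtain x' y' where xy': "b = x' + y'" "x' \<in> X" "y' \<in> Y" using b unfolding setprod_def by blast
      show ?thesis
      proof (cases "y = y'")
        case True
        then have "x \<noteq> x'" using ab xy xy' by blast
        have "a - b = x - x'" "b - a = x' - x" using xy xy' True by (simp_all add: gl4)
        then show ?thesis using X(3) xy xy' \<open>x \<noteq> x'\<close> unfolding QX_def by auto
      next
        case False
        have "a - b = x + y - y' - x'" "b - a = x' + y' - y - x" using xy xy' gl4 by auto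
        then show ?thesis using Y(4) xy xy' False unfolding QY_def by metis
      qed
    qed
  qed
  then have "good B k X Y" unfolding good_def D_def using X Y by blast
  then show ?thesis by blast
qed



definition pick :: "'a::group_add set \<Rightarrow> nat \<Rightarrow> 'a set \<times> 'a set" where
  "pick B k = (SOME XY. good B k (fst XY) (snd XY))"

primrec Aseq :: "nat \<Rightarrow> 'a::group_add set" where
  "Aseq 0 = {}"
| "Aseq (Suc k) = Aseq k \<union> setprod (fst (pick (Aseq k) (Suc k))) (snd (pick (Aseq k) (Suc k)))"

lemma pick_good:
  assumes "infinite (UNIV :: 'a::group_add set)" "finite (B :: 'a set)"
  shows "good B k (fst (pick B k)) (snd (pick B k))"
proof -
  obtain X Y where "good B k X Y" using good_exists[OF assms] by blast
  then have "\<exists>XY. good B k (fst XY) (snd XY)" by (intro exI[of _ "(X,Y)"]) simp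
  then show ?thesis unfolding pick_def by (rule someI_ex)
qed

lemma setprod_finite: "finite X \<Longrightarrow> finite Y \<Longrightarrow> finite (setprod X Y)"
proof -
  assume "finite X" "finite Y"
  moreover have "setprod X Y = (\<lambda>(x,y). x + y) ` (X \<times> Y)" unfolding setprod_def by auto
  ultimately show ?thesis by simp
qed

context
  fixes dummy :: "'a::group_add"
  assumes inf: "infinite (UNIV :: 'a set)"
begin

lemma Aseq_finite: "finite (Aseq k :: 'a set)"
proof (induction k)
  case 0 then show ?case by simp
next
  case (Suc k)
  have "good (Aseq k :: 'a set) (Suc k) (fst (pick (Aseq k) (Suc k))) (snd (pick (Aseq k) (Suc k)))"
    using pick_good[OF inf Suc] .
  then have "finite (fst (pick (Aseq k :: 'a set) (Suc k)))" "finite (snd (pick (Aseq k :: 'a set) (Suc k)))"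
    unfolding good_def by auto
  then have "finite (setprod (fst (pick (Aseq k :: 'a set) (Suc k))) (snd (pick (Aseq k :: 'a set) (Suc k))))"
    by (rule setprod_finite)
  then show ?case using Suc by simp
qed

lemma Aseq_good: "good (Aseq k :: 'a set) (Suc k) (fst (pick (Aseq k) (Suc k))) (snd (pick (Aseq k) (Suc k)))"
  using pick_good[OF inf Aseq_finite] .

lemma Aseq_mono: "i \<le> j \<Longrightarrow> (Aseq i :: 'a set) \<subseteq> Aseq j"
  by (rule lift_Suc_mono_le[of Aseq]) auto

lemma key:
  assumes h: "h \<noteq> 0" "h \<in> Dif (Aseq K :: 'a set)"
  shows "a \<in> Aseq j \<Longrightarrow> b \<in> Aseq j \<Longrightarrow> b - a = h \<Longrightarrow> a \<in> Aseq K \<and> b \<in> Aseq K"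
proof (induction j)
  case 0 then show ?case by simp
next
  case (Suc j)
  show ?case
  proof (cases "a \<in> Aseq j \<and> b \<in> Aseq j")
    case True then show ?thesis using Suc by blast
  next
    case False
    show ?thesis
    proof (cases "j < K")
      case True
      then have "Aseq (Suc j) \<subseteq> (Aseq K :: 'a set)" using Aseq_mono[of "Suc j" K] by linarith
      then show ?thesis using Suc.prems by blast
    next
      case False2: False
      then have hD: "h \<in> Dif (Aseq j)" using h(2) Dif_mono[OF Aseq_mono[of K j]] by auto
      define R where "R = setprod (fst (pick (Aseq j :: 'a set) (Suc j))) (snd (pick (Aseq j) (Suc j)))"
      have g: "\<forall>a\<in>R. \<forall>b\<in>Aseq j \<union> R. a \<noteq> b \<longrightarrow> a - b \<notin> Dif (Aseq j) \<and> b - a \<notin> Dif (Aseq j)"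
        using Aseq_good[of j] unfolding good_def R_def by blast
      have ab: "a \<in> Aseq j \<union> R" "b \<in> Aseq j \<union> R" using Suc.prems unfolding R_def by auto
      have "a \<noteq> b" using Suc.prems h(1) by auto
      have "a \<in> R \<or> b \<in> R" using False ab by blast
      then have "b - a \<notin> Dif (Aseq j)" using g ab \<open>a \<noteq> b\<close> by metis
      then show ?thesis using hD Suc.prems by simp
    qed
  qed
qed

definition Aset :: "'a set" where "Aset = (\<Union>k. Aseq k)"

lemma Aset_rect: "has_rectangle Aset n n"
proof (cases n)
  case 0 then show ?thesis using has_rect_0 by simp
next
  case (Suc k)
  have g: "good (Aseq k :: 'a set) (Suc k) (fst (pick (Aseq k) (Suc k))) (snd (pick (Aseq k) (Suc k)))"
    by (rule Aseq_good)
  have "setprod (fst (pick (Aseq k :: 'a set) (Suc k))) (snd (pick (Aseq k) (Suc k))) \<subseteq> Aset"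
    unfolding Aset_def by (metis Aseq.simps(2) UN_upper UNIV_I le_supE order_refl)
  then show ?thesis using g Suc unfolding good_def has_rectangle_def by blast
qed

lemma Aset_thin: "thin 1 Aset"
  unfolding thin_def
proof (intro allI impI)
  fix F :: "'a set" assume F: "finite F \<and> card F = Suc 1"
  then obtain g0 g1 where g: "F = {g0, g1}" "g0 \<noteq> g1" by (metis One_nat_def card_2_iff Suc_1)
  define h where "h = -g1 + g0"
  have h0: "h \<noteq> 0" unfolding h_def using g(2) by (metis add_minus_cancel add_0_right)
  have "(\<Inter>g\<in>F. ltrans g Aset) \<subseteq> (\<lambda>a. g0 + a) ` {a \<in> Aset. \<exists>b\<in>Aset. b - a = h}"
  proof
    fix z assume "z \<in> (\<Inter>g\<in>F. ltrans g Aset)"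
    then have "z \<in> ltrans g0 Aset" "z \<in> ltrans g1 Aset" using g by auto
    then obtain a b where ab: "a \<in> Aset" "z = g0 + a" "b \<in> Aset" "z = g1 + b" unfolding ltrans_def by blast
    have "b = -g1 + g0 + a" using ab by (metis add.assoc minus_add_cancel)
    then have "b - a = h" unfolding h_def by (simp add: add_diff_cancel)
    then show "z \<in> (\<lambda>a. g0 + a) ` {a \<in> Aset. \<exists>b\<in>Aset. b - a = h}" using ab by blast
  qed
  moreover have "finite {a \<in> Aset. \<exists>b\<in>Aset. b - a = h}"
  proof (cases "\<exists>a\<in>Aset. \<exists>b\<in>Aset. b - a = h")
    case False
    have "{a \<in> Aset. \<exists>b\<in>Aset. b - a = h} \<subseteq> {}" using False by blast
    then show ?thesis using finite_subset by blast
  next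
    case True
    then obtain a0 b0 i j where ab0: "a0 \<in> Aseq i" "b0 \<in> Aseq j" "b0 - a0 = h" unfolding Aset_def by blast
    define K where "K = max i j"
    have "a0 \<in> Aseq K" "b0 \<in> Aseq K" using ab0 Aseq_mono[of i K] Aseq_mono[of j K] unfolding K_def by auto
    then have hK: "h \<in> Dif (Aseq K)" unfolding Dif_def using ab0 by blast
    have "{a \<in> Aset. \<exists>b\<in>Aset. b - a = h} \<subseteq> Aseq K"
    proof
      fix a assume "a \<in> {a \<in> Aset. \<exists>b\<in>Aset. b - a = h}"
      then obtain b i' j' where "a \<in> Aseq i'" "b \<in> Aseq j'" "b - a = h" unfolding Aset_def by blast
      then have "a \<in> Aseq (max i' j')" "b \<in> Aseq (max i' j')"
        using Aseq_mono[of i' "max i' j'"] Aseq_mono[of j' "max i' j'"] by auto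
      then show "a \<in> Aseq K" using key[OF h0 hK] \<open>b - a = h\<close> by blast
    qed
    then show ?thesis using Aseq_finite finite_subset by blast
  qed
  ultimately show "finite (\<Inter>g\<in>F. ltrans g Aset)" using finite_subset by blast
qed

lemma BR_ne_FT: "(BR :: 'a set set) \<noteq> FT"
proof -
  have "Aset \<in> FT" using Aset_thin unfolding FT_def by blast
  moreover have "Aset \<notin> BR" using Aset_rect unfolding BR_def by blast
  ultimately show ?thesis by blast
qed

end


theorem theorem6p7:
  assumes "infinite (UNIV :: 'a::group_add set)"
  shows "set_ideal (BR :: 'a set set) \<and> translation_invariant (BR :: 'a set set)
    \<and> beta_closed (hat (BR :: 'a set set)) \<and> semigroup_ideal (hat (BR :: 'a set set))
    \<and> (\<forall>p\<in>betaG. p \<in> hat (BR :: 'a set set) \<longleftrightarrow> (\<forall>P\<in>p. \<forall>n. has_rectangle P n n))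
    \<and> (BR :: 'a set set) \<subset> FT"
proof (intro conjI ballI)
  show "set_ideal (BR :: 'a set set)" unfolding set_ideal_def
    using BR_union BR_subset UNIV_not_BR[OF assms] by blast
  show "translation_invariant (BR :: 'a set set)" unfolding translation_invariant_def
    using ltrans_BR rtrans_BR by blast
  show "beta_closed (hat (BR :: 'a set set))" by (rule hat_closed)
  show "semigroup_ideal (hat (BR :: 'a set set))" by (rule hat_ideal[OF assms])
  show "p \<in> hat (BR :: 'a set set) \<longleftrightarrow> (\<forall>P\<in>p. \<forall>n. has_rectangle P n n)" if "p \<in> betaG" for p
    using hat_char[OF that] by simp
  show "(BR :: 'a set set) \<subset> FT" using BR_FT BR_ne_FT[OF assms] by blast
qed

end
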